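(* Let $\Omega\subseteq\mathbb{R}^2$ be a domain and let $f_1,f_2,c_0,c_1,c_2$ be smooth real functions of one variable $r>0$. For $x=(x_1,x_2)\in\Omega$ and $y=(y_1,y_2)\in\mathbb{R}^2\setminus\{0\}$ put $$r=\sqrt{x_1^2+x_2^2},\qquad u=\sqrt{y_1^2+y_2^2},\qquad s=\frac{x_1y_1+x_2y_2}{u},$$ and consider the open set $U=\{(x,y): x\in\Omega,\ y\neq 0,\ r^2-s^2>0\}$, i.e. the set of pairs with $x$ and $y$ linearly independent. On $U$ define $$P=f_1(r)\,s+f_2(r)\sqrt{r^2-s^2},\qquad Q=c_0(r)+c_2(r)s^2+c_1(r)\,s\sqrt{r^2-s^2},$$ and, for $i=1,2$, $$G^i=u\,P\,y_i+u^2\,Q\,x_i .$$ Then the following hold on $U$. (1) The mean Berwald curvature of this spray vanishes identically: $E_{ij}=0$ for all $i,j\in\{1,2\}$. (2) The function $H:=(n+1)(P-sP_s)+(r^2-s^2)(Q_s-sQ_{ss})$ with $n=2$ equals $\dfrac{r^2\bigl(3f_2(r)+r^2c_1(r)\bigr)}{\sqrt{r^2-s^2}}$. In particular, at every point of $U$ with $3f_2(r)+r^2c_1(r)\neq 0$, $H\neq 0$ although $E_{ij}=0$. Consequently, in dimension two the condition $(n+1)(P-sP_s)+(r^2-s^2)(Q_s-sQ_{ss})=0$ is not necessary for the vanishing of the mean Berwald curvature of a spray of the form $G^i=uPy_i+u^2Qx_i$.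
   Context: The square root denotes the nonnegative square root; by the Cauchy–Schwarz inequality $s^2\le r^2$. Here $P,Q$ are regarded as functions of $(r,s)$, and $P_s,Q_s,Q_{ss}$ denote partial derivatives with respect to $s$ at fixed $r$. The functions $G^i(x,y)$ are the coefficients of a spray on $U$, and its mean Berwald curvature is $E_{ij}=\frac12\,\frac{\partial^2}{\partial y_i\,\partial y_j}\Bigl(\sum_{m=1}^2\frac{\partial G^m}{\partial y_m}\Bigr)$, $i,j\in\{1,2\}$. *)

theory Defs
  imports "HOL-Analysis.Analysis"
begin

definition smooth_pos :: "(real \<Rightarrow> real) \<Rightarrow> bool" where
  "smooth_pos f \<longleftrightarrow> (\<forall>k::nat. \<forall>r>0. ((deriv ^^ k) f) differentiable (at r))"

definition sp_r :: "real \<Rightarrow> real \<Rightarrow> real" where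
  "sp_r x1 x2 = sqrt (x1\<^sup>2 + x2\<^sup>2)"

definition sp_u :: "real \<Rightarrow> real \<Rightarrow> real" where
  "sp_u y1 y2 = sqrt (y1\<^sup>2 + y2\<^sup>2)"

definition sp_s :: "real \<Rightarrow> real \<Rightarrow> real \<Rightarrow> real \<Rightarrow> real" where
  "sp_s x1 x2 y1 y2 = (x1 * y1 + x2 * y2) / sp_u y1 y2"

definition Pfun :: "(real \<Rightarrow> real) \<Rightarrow> (real \<Rightarrow> real) \<Rightarrow> real \<Rightarrow> real \<Rightarrow> real" where
  "Pfun f1 f2 r s = f1 r * s + f2 r * sqrt (r\<^sup>2 - s\<^sup>2)"

definition Qfun :: "(real \<Rightarrow> real) \<Rightarrow> (real \<Rightarrow> real) \<Rightarrow> (real \<Rightarrow> real) \<Rightarrow> real \<Rightarrow> real \<Rightarrow> real" where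
  "Qfun c0 c1 c2 r s = c0 r + c2 r * s\<^sup>2 + c1 r * s * sqrt (r\<^sup>2 - s\<^sup>2)"

definition sprayG :: "(real \<Rightarrow> real) \<Rightarrow> (real \<Rightarrow> real) \<Rightarrow> (real \<Rightarrow> real) \<Rightarrow> (real \<Rightarrow> real)
    \<Rightarrow> (real \<Rightarrow> real) \<Rightarrow> nat \<Rightarrow> real \<Rightarrow> real \<Rightarrow> real \<Rightarrow> real \<Rightarrow> real" where
  "sprayG f1 f2 c0 c1 c2 i x1 x2 y1 y2 =
     (let r = sp_r x1 x2; u = sp_u y1 y2; s = sp_s x1 x2 y1 y2;
          P = Pfun f1 f2 r s; Q = Qfun c0 c1 c2 r s
      in u * P * (if i = 1 then y1 else y2) + u\<^sup>2 * Q * (if i = 1 then x1 else x2))"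

definition dy :: "nat \<Rightarrow> (real \<Rightarrow> real \<Rightarrow> real \<Rightarrow> real \<Rightarrow> real) \<Rightarrow> real \<Rightarrow> real \<Rightarrow> real \<Rightarrow> real \<Rightarrow> real" where
  "dy j F x1 x2 y1 y2 =
     (if j = 1 then deriv (\<lambda>t. F x1 x2 t y2) y1 else deriv (\<lambda>t. F x1 x2 y1 t) y2)"

definition mean_berwald :: "(nat \<Rightarrow> real \<Rightarrow> real \<Rightarrow> real \<Rightarrow> real \<Rightarrow> real) \<Rightarrow> nat \<Rightarrow> nat
    \<Rightarrow> real \<Rightarrow> real \<Rightarrow> real \<Rightarrow> real \<Rightarrow> real" where
  "mean_berwald G i j x1 x2 y1 y2 =
     1/2 * dy i (dy j (\<lambda>a b c d. (\<Sum>m\<in>{1,2}. dy m (G m) a b c d))) x1 x2 y1 y2"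

definition Hfun :: "(real \<Rightarrow> real) \<Rightarrow> (real \<Rightarrow> real) \<Rightarrow> (real \<Rightarrow> real) \<Rightarrow> (real \<Rightarrow> real)
    \<Rightarrow> (real \<Rightarrow> real) \<Rightarrow> real \<Rightarrow> real \<Rightarrow> real" where
  "Hfun f1 f2 c0 c1 c2 r s =
     (2 + 1) * (Pfun f1 f2 r s - s * deriv (\<lambda>t. Pfun f1 f2 r t) s)
     + (r\<^sup>2 - s\<^sup>2) * (deriv (\<lambda>t. Qfun c0 c1 c2 r t) s
                      - s * deriv (deriv (\<lambda>t. Qfun c0 c1 c2 r t)) s)"

end

theory Submission
  imports Defs
begin

lemma deriv_local:
  assumes "open S" "a \<in> S" "\<And>x. x \<in> S \<Longrightarrow> f x = g x" "(g has_real_derivative D) (at a)"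
  shows "deriv f a = D"
  by (rule DERIV_imp_deriv, rule has_field_derivative_transform_within_open[OF assms(4,1,2)])
     (simp add: assms(3))

lemma open_line1: "open {\<tau>::real. 0 < \<sigma>*(x1*t2 - x2*\<tau>)}"
  by (rule open_Collect_less) (auto intro!: continuous_intros)

lemma open_line2: "open {\<tau>::real. 0 < \<sigma>*(x1*\<tau> - x2*t1)}"
  by (rule open_Collect_less) (auto intro!: continuous_intros)

lemma poly_G:
  fixes \<sigma> x1 x2 t1 t2 :: real
  assumes sg: "\<sigma> = 1 \<or> \<sigma> = -1" and pos: "0 < \<sigma>*(x1*t2 - x2*t1)"
  shows "sprayG f1 f2 c0 c1 c2 i x1 x2 t1 t2 =
    (f1 (sp_r x1 x2) * (x1*t1+x2*t2) + \<sigma> * f2 (sp_r x1 x2) * (x1*t2 - x2*t1)) * (if i = 1 then t1 else t2)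
    + (c0 (sp_r x1 x2) * (t1\<^sup>2+t2\<^sup>2) + c2 (sp_r x1 x2) * (x1*t1+x2*t2)\<^sup>2
       + \<sigma> * c1 (sp_r x1 x2) * (x1*t1+x2*t2) * (x1*t2 - x2*t1)) * (if i = 1 then x1 else x2)"
proof -
  define R where "R = sp_r x1 x2"
  define u where "u = sp_u t1 t2"
  define L where "L = x1*t1+x2*t2"
  define M where "M = x1*t2 - x2*t1"
  have M0: "M \<noteq> 0" using pos M_def by auto
  have "t1\<^sup>2 + t2\<^sup>2 > 0"
  proof (rule ccontr)
    assume "\<not> ?thesis"
    hence "t1 = 0 \<and> t2 = 0" by (smt (verit) power2_less_eq_zero_iff sum_power2_gt_zero_iff)
    thus False using M0 M_def by simp
  qed
  hence u0: "u > 0" and u2: "u\<^sup>2 = t1\<^sup>2 + t2\<^sup>2" unfolding u_def sp_u_def by auto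
  have R2: "R\<^sup>2 = x1\<^sup>2 + x2\<^sup>2" unfolding R_def sp_r_def by simp
  have s: "sp_s x1 x2 t1 t2 = L / u" unfolding sp_s_def L_def u_def ..
  have lag: "R\<^sup>2 * u\<^sup>2 - L\<^sup>2 = M\<^sup>2"
    unfolding R2 u2 L_def M_def by algebra
  have "R\<^sup>2 - (L/u)\<^sup>2 = (M/u)\<^sup>2"
    using u0 lag by (simp add: field_simps power_divide)
  hence w: "sqrt (R\<^sup>2 - (L/u)\<^sup>2) = \<sigma> * M / u"
  proof -
    have "\<bar>M\<bar> = \<sigma> * M" using sg pos unfolding M_def by auto
    thus ?thesis unfolding \<open>R\<^sup>2 - (L/u)\<^sup>2 = (M/u)\<^sup>2\<close> real_sqrt_abs
      using u0 by simp
  qed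
  have uP: "u * Pfun f1 f2 R (L/u) = f1 R * L + \<sigma> * f2 R * M"
    unfolding Pfun_def w using u0 by (simp add: field_simps)
  have uQ: "u\<^sup>2 * Qfun c0 c1 c2 R (L/u) = c0 R * u\<^sup>2 + c2 R * L\<^sup>2 + \<sigma> * c1 R * L * M"
    unfolding Qfun_def w using u0 by (simp add: field_simps power2_eq_square)
  have "sprayG f1 f2 c0 c1 c2 i x1 x2 t1 t2 = (u * Pfun f1 f2 R (L/u)) * (if i = 1 then t1 else t2)
     + (u\<^sup>2 * Qfun c0 c1 c2 R (L/u)) * (if i = 1 then x1 else x2)"
    unfolding sprayG_def Let_def s R_def u_def by simp
  then show ?thesis unfolding uP uQ unfolding u2 R_def L_def M_def .
qed


lemma dG_sum:
  fixes \<sigma> x1 x2 t1 t2 :: real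
  assumes sg: "\<sigma> = 1 \<or> \<sigma> = -1" and pos: "0 < \<sigma>*(x1*t2 - x2*t1)"
  shows "dy 1 (sprayG f1 f2 c0 c1 c2 1) x1 x2 t1 t2 + dy 2 (sprayG f1 f2 c0 c1 c2 2) x1 x2 t1 t2
    = (3 * f1 (sp_r x1 x2) + 2 * c0 (sp_r x1 x2) + 2 * c2 (sp_r x1 x2) * (x1\<^sup>2+x2\<^sup>2)) * (x1*t1+x2*t2)
      + \<sigma> * (3 * f2 (sp_r x1 x2) + c1 (sp_r x1 x2) * (x1\<^sup>2+x2\<^sup>2)) * (x1*t2 - x2*t1)"
proof -
  define a where "a = f1 (sp_r x1 x2)"
  define b where "b = f2 (sp_r x1 x2)"
  define e0 where "e0 = c0 (sp_r x1 x2)"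
  define e1 where "e1 = c1 (sp_r x1 x2)"
  define e2 where "e2 = c2 (sp_r x1 x2)"
  have d1: "dy 1 (sprayG f1 f2 c0 c1 c2 1) x1 x2 t1 t2 =
     (a*x1 - \<sigma>*b*x2)*t1 + (a*(x1*t1+x2*t2) + \<sigma>*b*(x1*t2 - x2*t1))
     + (2*e0*t1 + 2*e2*(x1*t1+x2*t2)*x1 + \<sigma>*e1*(x1*(x1*t2 - x2*t1) - x2*(x1*t1+x2*t2)))*x1"
  proof -
    have S: "open {\<tau>. 0 < \<sigma> * (x1 * t2 - x2 * \<tau>)}" by (rule open_line1)
    have A: "t1 \<in> {\<tau>. 0 < \<sigma> * (x1 * t2 - x2 * \<tau>)}" using pos by simp
    have B: "sprayG f1 f2 c0 c1 c2 1 x1 x2 \<tau> t2 =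
      (a * (x1*\<tau>+x2*t2) + \<sigma>*b*(x1*t2-x2*\<tau>)) * \<tau> + (e0*(\<tau>\<^sup>2+t2\<^sup>2) + e2*(x1*\<tau>+x2*t2)\<^sup>2
         + \<sigma>*e1*(x1*\<tau>+x2*t2)*(x1*t2-x2*\<tau>))*x1"
      if "\<tau> \<in> {\<tau>. 0 < \<sigma> * (x1 * t2 - x2 * \<tau>)}" for \<tau>
      using poly_G[OF sg, of x1 t2 x2 \<tau> f1 f2 c0 c1 c2 1] that
      unfolding a_def b_def e0_def e1_def e2_def by simp
    have C: "((\<lambda>\<tau>. (a * (x1*\<tau>+x2*t2) + \<sigma>*b*(x1*t2-x2*\<tau>)) * \<tau> + (e0*(\<tau>\<^sup>2+t2\<^sup>2) + e2*(x1*\<tau>+x2*t2)\<^sup>2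
         + \<sigma>*e1*(x1*\<tau>+x2*t2)*(x1*t2-x2*\<tau>))*x1) has_real_derivative
     (a*x1 - \<sigma>*b*x2)*t1 + (a*(x1*t1+x2*t2) + \<sigma>*b*(x1*t2 - x2*t1))
     + (2*e0*t1 + 2*e2*(x1*t1+x2*t2)*x1 + \<sigma>*e1*(x1*(x1*t2 - x2*t1) - x2*(x1*t1+x2*t2)))*x1) (at t1)"
      apply (rule derivative_eq_intros refl)+
      by (simp add: algebra_simps power2_eq_square)
    show ?thesis unfolding dy_def using deriv_local[OF S A B C] by simp
  qed
  have d2: "dy 2 (sprayG f1 f2 c0 c1 c2 2) x1 x2 t1 t2 =
     (a*x2 + \<sigma>*b*x1)*t2 + (a*(x1*t1+x2*t2) + \<sigma>*b*(x1*t2 - x2*t1))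
     + (2*e0*t2 + 2*e2*(x1*t1+x2*t2)*x2 + \<sigma>*e1*(x2*(x1*t2 - x2*t1) + x1*(x1*t1+x2*t2)))*x2"
  proof -
    have S: "open {\<tau>. 0 < \<sigma> * (x1 * \<tau> - x2 * t1)}" by (rule open_line2)
    have A: "t2 \<in> {\<tau>. 0 < \<sigma> * (x1 * \<tau> - x2 * t1)}" using pos by simp
    have B: "sprayG f1 f2 c0 c1 c2 2 x1 x2 t1 \<tau> =
      (a * (x1*t1+x2*\<tau>) + \<sigma>*b*(x1*\<tau>-x2*t1)) * \<tau> + (e0*(t1\<^sup>2+\<tau>\<^sup>2) + e2*(x1*t1+x2*\<tau>)\<^sup>2
         + \<sigma>*e1*(x1*t1+x2*\<tau>)*(x1*\<tau>-x2*t1))*x2"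
      if "\<tau> \<in> {\<tau>. 0 < \<sigma> * (x1 * \<tau> - x2 * t1)}" for \<tau>
      using poly_G[OF sg, of x1 \<tau> x2 t1 f1 f2 c0 c1 c2 2] that
      unfolding a_def b_def e0_def e1_def e2_def by simp
    have C: "((\<lambda>\<tau>. (a * (x1*t1+x2*\<tau>) + \<sigma>*b*(x1*\<tau>-x2*t1)) * \<tau> + (e0*(t1\<^sup>2+\<tau>\<^sup>2) + e2*(x1*t1+x2*\<tau>)\<^sup>2
         + \<sigma>*e1*(x1*t1+x2*\<tau>)*(x1*\<tau>-x2*t1))*x2) has_real_derivative
     (a*x2 + \<sigma>*b*x1)*t2 + (a*(x1*t1+x2*t2) + \<sigma>*b*(x1*t2 - x2*t1))
     + (2*e0*t2 + 2*e2*(x1*t1+x2*t2)*x2 + \<sigma>*e1*(x2*(x1*t2 - x2*t1) + x1*(x1*t1+x2*t2)))*x2) (at t2)"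
      apply (rule derivative_eq_intros refl)+
      by (simp add: algebra_simps power2_eq_square)
    show ?thesis unfolding dy_def using deriv_local[OF S A B C] by simp
  qed
  show ?thesis unfolding d1 d2 a_def[symmetric] b_def[symmetric] e0_def[symmetric]
      e1_def[symmetric] e2_def[symmetric]
    by (simp add: algebra_simps power2_eq_square)
qed


lemma dy_lin:
  fixes F :: "real \<Rightarrow> real \<Rightarrow> real \<Rightarrow> real \<Rightarrow> real"
  assumes lin: "\<And>t1 t2. 0 < \<sigma>*(x1*t2 - x2*t1) \<Longrightarrow> F x1 x2 t1 t2 = K + \<alpha>*(x1*t1+x2*t2) + \<beta>*(x1*t2 - x2*t1)"
    and pos: "0 < \<sigma>*(x1*t2 - x2*t1)"
  shows "dy j F x1 x2 t1 t2 = (if j = 1 then \<alpha>*x1 - \<beta>*x2 else \<alpha>*x2 + \<beta>*x1)"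
proof (cases "j = 1")
  case True
  have S: "open {\<tau>. 0 < \<sigma> * (x1 * t2 - x2 * \<tau>)}" by (rule open_line1)
  have A: "t1 \<in> {\<tau>. 0 < \<sigma> * (x1 * t2 - x2 * \<tau>)}" using pos by simp
  have B: "F x1 x2 \<tau> t2 = K + \<alpha>*(x1*\<tau>+x2*t2) + \<beta>*(x1*t2 - x2*\<tau>)"
    if "\<tau> \<in> {\<tau>. 0 < \<sigma> * (x1 * t2 - x2 * \<tau>)}" for \<tau> using lin that by simp
  have C: "((\<lambda>\<tau>. K + \<alpha>*(x1*\<tau>+x2*t2) + \<beta>*(x1*t2 - x2*\<tau>)) has_real_derivative \<alpha>*x1 - \<beta>*x2) (at t1)"
    apply (rule derivative_eq_intros refl)+
    by (simp add: algebra_simps)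
  show ?thesis unfolding dy_def using deriv_local[OF S A B C] True by simp
next
  case False
  have S: "open {\<tau>. 0 < \<sigma> * (x1 * \<tau> - x2 * t1)}" by (rule open_line2)
  have A: "t2 \<in> {\<tau>. 0 < \<sigma> * (x1 * \<tau> - x2 * t1)}" using pos by simp
  have B: "F x1 x2 t1 \<tau> = K + \<alpha>*(x1*t1+x2*\<tau>) + \<beta>*(x1*\<tau> - x2*t1)"
    if "\<tau> \<in> {\<tau>. 0 < \<sigma> * (x1 * \<tau> - x2 * t1)}" for \<tau> using lin that by simp
  have C: "((\<lambda>\<tau>. K + \<alpha>*(x1*t1+x2*\<tau>) + \<beta>*(x1*\<tau> - x2*t1)) has_real_derivative \<alpha>*x2 + \<beta>*x1) (at t2)"
    apply (rule derivative_eq_intros refl)+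
    by (simp add: algebra_simps)
  show ?thesis unfolding dy_def using deriv_local[OF S A B C] False by simp
qed

lemma dy_const:
  fixes F :: "real \<Rightarrow> real \<Rightarrow> real \<Rightarrow> real \<Rightarrow> real"
  assumes cst: "\<And>t1 t2. 0 < \<sigma>*(x1*t2 - x2*t1) \<Longrightarrow> F x1 x2 t1 t2 = K"
    and pos: "0 < \<sigma>*(x1*t2 - x2*t1)"
  shows "dy j F x1 x2 t1 t2 = 0"
  using dy_lin[of \<sigma> x1 x2 F K 0 0 t2 t1 j] cst pos by simp

lemma sqrt_deriv:
  fixes R t :: real
  assumes "0 < R\<^sup>2 - t\<^sup>2"
  shows "((\<lambda>t. sqrt (R\<^sup>2 - t\<^sup>2)) has_real_derivative - t / sqrt (R\<^sup>2 - t\<^sup>2)) (at t)"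
proof -
  have d: "((\<lambda>t. R\<^sup>2 - t\<^sup>2) has_real_derivative - (2*t)) (at t)"
    by (rule derivative_eq_intros refl)+ simp
  have "((\<lambda>t. sqrt (R\<^sup>2 - t\<^sup>2)) has_real_derivative inverse (sqrt (R\<^sup>2 - t\<^sup>2)) / 2 * (- (2*t))) (at t)"
    by (rule DERIV_chain2[OF DERIV_real_sqrt[OF assms] d])
  moreover have "inverse (sqrt (R\<^sup>2 - t\<^sup>2)) / 2 * (- (2*t)) = - t / sqrt (R\<^sup>2 - t\<^sup>2)"
    by (simp add: field_simps)
  ultimately show ?thesis by simp
qed

lemma H_eq:
  fixes R s :: real
  assumes w0: "R\<^sup>2 - s\<^sup>2 > 0"
  shows "Hfun f1 f2 c0 c1 c2 R s = R\<^sup>2 * (3 * f2 R + R\<^sup>2 * c1 R) / sqrt (R\<^sup>2 - s\<^sup>2)"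
proof -
  define a where "a = f1 R"
  define b where "b = f2 R"
  define e0 where "e0 = c0 R"
  define e1 where "e1 = c1 R"
  define e2 where "e2 = c2 R"
  define w where "w = sqrt (R\<^sup>2 - s\<^sup>2)"
  have wpos: "w > 0" using w0 unfolding w_def by simp
  have wne: "sqrt (R\<^sup>2 - s\<^sup>2) \<noteq> 0" using w0 by simp
  have w2: "w\<^sup>2 = R\<^sup>2 - s\<^sup>2" using w0 unfolding w_def by simp
  have dP: "((\<lambda>t. Pfun f1 f2 R t) has_real_derivative a - b * s / w) (at s)"
    unfolding Pfun_def a_def[symmetric] b_def[symmetric]
    apply (rule sqrt_deriv derivative_eq_intros refl w0 wne)+
    using wpos unfolding w_def by (simp add: field_simps)
  define Q' where "Q' = (\<lambda>t. 2*e2*t + e1* sqrt (R\<^sup>2 - t\<^sup>2) - e1*t\<^sup>2/sqrt (R\<^sup>2 - t\<^sup>2))"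
  define S where "S = {t::real. t\<^sup>2 < R\<^sup>2}"
  have S: "open S" unfolding S_def by (rule open_Collect_less) (auto intro!: continuous_intros)
  have sS: "s \<in> S" using w0 unfolding S_def by simp
  have dQ: "((\<lambda>t. Qfun c0 c1 c2 R t) has_real_derivative Q' t) (at t)" if "t \<in> S" for t
  proof -
    have t0: "0 < R\<^sup>2 - t\<^sup>2" using that unfolding S_def by simp
    have tne: "sqrt (R\<^sup>2 - t\<^sup>2) \<noteq> 0" using t0 by simp
    show ?thesis
      unfolding Qfun_def e0_def[symmetric] e1_def[symmetric] e2_def[symmetric] Q'_def
      apply (rule sqrt_deriv derivative_eq_intros refl t0 tne)+
      using t0 by (simp add: field_simps power2_eq_square)
  qed
  have dQ2: "(Q' has_real_derivative 2*e2 - 3*e1* s/w - e1* s^3/w^3) (at s)"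
    unfolding Q'_def
    apply (rule sqrt_deriv derivative_eq_intros refl w0 wne)+
    using wpos w2 unfolding w_def[symmetric] by (simp add: field_simps power2_eq_square power3_eq_cube)
  have h1: "deriv (\<lambda>t. Pfun f1 f2 R t) s = a - b * s / w" using dP by (rule DERIV_imp_deriv)
  have h2: "deriv (\<lambda>t. Qfun c0 c1 c2 R t) s = Q' s" using dQ[OF sS] by (rule DERIV_imp_deriv)
  have h3: "deriv (deriv (\<lambda>t. Qfun c0 c1 c2 R t)) s = 2*e2 - 3*e1* s/w - e1* s^3/w^3"
    by (rule deriv_local[OF S sS _ dQ2]) (rule DERIV_imp_deriv[OF dQ])
  have Q's: "Q' s = 2*e2* s + e1*w - e1* s\<^sup>2/w" unfolding Q'_def w_def ..
  have P: "Pfun f1 f2 R s = a* s + b*w" unfolding Pfun_def a_def b_def w_def ..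
  have R2: "R\<^sup>2 = w\<^sup>2 + s\<^sup>2" using w2 by simp
  show ?thesis
    unfolding Hfun_def h1 h2 h3 Q's P w_def[symmetric] b_def[symmetric] e1_def[symmetric] R2
    using wpos by (simp add: field_simps power2_eq_square power3_eq_cube)
qed

theorem mainTheorem1:
  fixes \<Omega> :: "(real \<times> real) set"
    and f1 f2 c0 c1 c2 :: "real \<Rightarrow> real"
    and x1 x2 y1 y2 :: real
  assumes "open \<Omega>" and "connected \<Omega>"
    and "smooth_pos f1" "smooth_pos f2" "smooth_pos c0" "smooth_pos c1" "smooth_pos c2"
    and "(x1, x2) \<in> \<Omega>" and "(y1, y2) \<noteq> (0, 0)"
    and "(sp_r x1 x2)\<^sup>2 - (sp_s x1 x2 y1 y2)\<^sup>2 > 0"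
  shows "(\<forall>i\<in>{1,2}. \<forall>j\<in>{1,2}.
            mean_berwald (sprayG f1 f2 c0 c1 c2) i j x1 x2 y1 y2 = 0)
       \<and> Hfun f1 f2 c0 c1 c2 (sp_r x1 x2) (sp_s x1 x2 y1 y2)
           = (sp_r x1 x2)\<^sup>2 * (3 * f2 (sp_r x1 x2) + (sp_r x1 x2)\<^sup>2 * c1 (sp_r x1 x2))
             / sqrt ((sp_r x1 x2)\<^sup>2 - (sp_s x1 x2 y1 y2)\<^sup>2)
       \<and> (3 * f2 (sp_r x1 x2) + (sp_r x1 x2)\<^sup>2 * c1 (sp_r x1 x2) \<noteq> 0 \<longrightarrow>
            Hfun f1 f2 c0 c1 c2 (sp_r x1 x2) (sp_s x1 x2 y1 y2) \<noteq> 0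
            \<and> (\<forall>i\<in>{1,2}. \<forall>j\<in>{1,2}. mean_berwald (sprayG f1 f2 c0 c1 c2) i j x1 x2 y1 y2 = 0))"
proof -
  define R where "R = sp_r x1 x2"
  define u where "u = sp_u y1 y2"
  define L where "L = x1*y1+x2*y2"
  define M where "M = x1*y2 - x2*y1"
  define \<sigma> where "\<sigma> = sgn M"
  have hyp: "R\<^sup>2 - (sp_s x1 x2 y1 y2)\<^sup>2 > 0" using assms(10) unfolding R_def .
  have "y1\<^sup>2 + y2\<^sup>2 > 0" using assms(9) by (simp add: sum_power2_gt_zero_iff)
  hence u0: "u > 0" and u2: "u\<^sup>2 = y1\<^sup>2 + y2\<^sup>2" unfolding u_def sp_u_def by auto
  have R2: "R\<^sup>2 = x1\<^sup>2 + x2\<^sup>2" unfolding R_def sp_r_def by simp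
  have lag: "R\<^sup>2 * u\<^sup>2 - L\<^sup>2 = M\<^sup>2"
    unfolding R2 u2 L_def M_def by algebra
  have M0: "M \<noteq> 0"
  proof
    assume "M = 0"
    hence "L\<^sup>2 = R\<^sup>2 * u\<^sup>2" using lag by simp
    hence "(sp_s x1 x2 y1 y2)\<^sup>2 = R\<^sup>2" unfolding sp_s_def L_def[symmetric] u_def[symmetric]
      using u0 by (simp add: power_divide)
    thus False using hyp by simp
  qed
  have sg: "\<sigma> = 1 \<or> \<sigma> = -1" unfolding \<sigma>_def using M0 by (auto simp: sgn_if)
  have posy: "0 < \<sigma> * (x1*y2 - x2*y1)" unfolding \<sigma>_def M_def[symmetric] using M0
    by (auto simp: sgn_if)
  define F where "F = (\<lambda>a b c d. \<Sum>m\<in>{1::nat,2}. dy m (sprayG f1 f2 c0 c1 c2 m) a b c d)"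
  define \<alpha> where "\<alpha> = 3 * f1 (sp_r x1 x2) + 2 * c0 (sp_r x1 x2) + 2 * c2 (sp_r x1 x2) * (x1\<^sup>2+x2\<^sup>2)"
  define \<beta> where "\<beta> = \<sigma> * (3 * f2 (sp_r x1 x2) + c1 (sp_r x1 x2) * (x1\<^sup>2+x2\<^sup>2))"
  have Flin: "F x1 x2 t1 t2 = 0 + \<alpha>*(x1*t1+x2*t2) + \<beta>*(x1*t2 - x2*t1)"
    if "0 < \<sigma>*(x1*t2 - x2*t1)" for t1 t2
    using dG_sum[OF sg that, of f1 f2 c0 c1 c2] unfolding F_def \<alpha>_def \<beta>_def by simp
  have Fc: "dy j F x1 x2 t1 t2 = (if j = 1 then \<alpha>*x1 - \<beta>*x2 else \<alpha>*x2 + \<beta>*x1)"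
    if "0 < \<sigma>*(x1*t2 - x2*t1)" for j t1 t2
    by (rule dy_lin[where F=F and K=0 and \<alpha>=\<alpha> and \<beta>=\<beta>, OF Flin that])
  have E: "mean_berwald (sprayG f1 f2 c0 c1 c2) i j x1 x2 y1 y2 = 0" for i j
  proof -
    have "dy i (dy j F) x1 x2 y1 y2 = 0"
      by (rule dy_const[where F="dy j F" and K="if j = 1 then \<alpha>*x1 - \<beta>*x2 else \<alpha>*x2 + \<beta>*x1", OF Fc posy])
    thus ?thesis unfolding mean_berwald_def F_def by simp
  qed
  have H: "Hfun f1 f2 c0 c1 c2 R (sp_s x1 x2 y1 y2)
      = R\<^sup>2 * (3 * f2 R + R\<^sup>2 * c1 R) / sqrt (R\<^sup>2 - (sp_s x1 x2 y1 y2)\<^sup>2)"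
    by (rule H_eq[OF hyp])
  have Rpos: "R\<^sup>2 > 0" using hyp by (smt (verit) zero_le_power2)
  have Hne: "Hfun f1 f2 c0 c1 c2 R (sp_s x1 x2 y1 y2) \<noteq> 0"
    if "3 * f2 R + R\<^sup>2 * c1 R \<noteq> 0"
    unfolding H using that Rpos hyp by simp
  show ?thesis using E H Hne unfolding R_def by blast
qed

end
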